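(* For each $n$, let $P$ be a symmetric $n\times n$ matrix with entries in $[0,1]$ and $P_{ij}=\omega\bigl(\sqrt{\log n/n}\bigr)$ for all $i\ne j$. Let $G$ be a random graph generated from $P$, let $T^*$ be an optimal HC-tree for $G$ with respect to $\rho_G$, and let $\bar T^*$ be an optimal HC-tree for the expectation graph $\bar G$. Then with high probability $|\mathrm{TC}_G(T^* )-\mathrm{TC}_{\bar G}(\bar T^* )|=o(\mathrm{TC}_{\bar G}(\bar T^* ))$.
   Context: A random graph generated from $P$ on $V=\{v_1,\dots,v_n\}$ contains each edge $(v_i,v_j)$ independently with probability $P_{ij}$, with unit weight (non-edges weight $0$). The expectation graph $\bar G$ is the complete weighted graph on $V$ with $w_{ij}=P_{ij}$. "With high probability" means with probability larger than $1-n^{-\varepsilon}$ for some constant $\varepsilon>0$. An HC-tree for $V$ is a rooted tree with leaf set $V$. For distinct $i,j,k$: $\{i,j|k\}$ holds in $T$ if $\mathrm{LCA}(v_i,v_j)$ is a proper descendant of $\mathrm{LCA}(v_i,v_j,v_k)$; $\{i|j|k\}$ holds if $\mathrm{LCA}(v_i,v_j)=\mathrm{LCA}(v_j,v_k)=\mathrm{LCA}(v_i,v_j,v_k)$. Triplet cost $c_T(i,j,k)$: $w_{ik}+w_{jk}$ if $\{i,j|k\}$; $w_{ij}+w_{jk}$ if $\{i,k|j\}$; $w_{ij}+w_{ik}$ if $\{j,k|i\}$; $w_{ij}+w_{jk}+w_{ik}$ if $\{i|j|k\}$. $\mathrm{TC}_G(T)=\sum c_T(i,j,k)$ and $\mathrm{BC}(G)=\sum\min\{w_{ij}+w_{ik},w_{ij}+w_{jk},w_{ik}+w_{jk}\}$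 over unordered triples of distinct indices; $\rho_G(T)=\mathrm{TC}_G(T)/\mathrm{BC}(G)$ (with $0/0=1$, $x/0=+\infty$ for $x>0$). Optimal means minimizing $\rho$ (equivalently $\mathrm{TC}$) over all HC-trees. *)

theory Defs
  imports "HOL-Probability.Probability"
begin

datatype hctree = Leaf nat | Node "hctree list"

primrec leaf_list :: "hctree \<Rightarrow> nat list" where
  "leaf_list (Leaf v) = [v]"
| "leaf_list (Node ts) = concat (map leaf_list ts)"

primrec subtrees :: "hctree \<Rightarrow> hctree set" where
  "subtrees (Leaf v) = {Leaf v}"
| "subtrees (Node ts) = insert (Node ts) (\<Union> (set (map subtrees ts)))"

primrec wf_tree :: "hctree \<Rightarrow> bool" where
  "wf_tree (Leaf v) = True"
| "wf_tree (Node ts) = (ts \<noteq> [] \<and> list_all id (map wf_tree ts))"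

definition leaves :: "hctree \<Rightarrow> nat set" where
  "leaves t = set (leaf_list t)"

definition is_hc_tree :: "nat \<Rightarrow> hctree \<Rightarrow> bool" where
  "is_hc_tree n T \<longleftrightarrow> wf_tree T \<and> distinct (leaf_list T) \<and> set (leaf_list T) = {..<n}"

text \<open>{i,j|k}: LCA(i,j) is a proper descendant of LCA(i,j,k), i.e. some node's
  subtree contains i and j but not k.\<close>
definition split3 :: "hctree \<Rightarrow> nat \<Rightarrow> nat \<Rightarrow> nat \<Rightarrow> bool" where
  "split3 T i j k \<longleftrightarrow> (\<exists>S\<in>subtrees T. i \<in> leaves S \<and> j \<in> leaves S \<and> k \<notin> leaves S)"

definition tcost :: "(nat \<Rightarrow> nat \<Rightarrow> real) \<Rightarrow> hctree \<Rightarrow> nat \<Rightarrow> nat \<Rightarrow> nat \<Rightarrow> real" where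
  "tcost w T i j k =
     (if split3 T i j k then w i k + w j k
      else if split3 T i k j then w i j + w j k
      else if split3 T j k i then w i j + w i k
      else w i j + w j k + w i k)"

definition triples :: "nat \<Rightarrow> (nat \<times> nat \<times> nat) set" where
  "triples n = {(i, j, k). i < j \<and> j < k \<and> k < n}"

definition TC :: "(nat \<Rightarrow> nat \<Rightarrow> real) \<Rightarrow> nat \<Rightarrow> hctree \<Rightarrow> real" where
  "TC w n T = (\<Sum>(i, j, k)\<in>triples n. tcost w T i j k)"

definition BC :: "(nat \<Rightarrow> nat \<Rightarrow> real) \<Rightarrow> nat \<Rightarrow> real" where
  "BC w n = (\<Sum>(i, j, k)\<in>triples n. min (min (w i j + w i k) (w i j + w j k)) (w i k + w j k))"

definition rho :: "(nat \<Rightarrow> nat \<Rightarrow> real) \<Rightarrow> nat \<Rightarrow> hctree \<Rightarrow> ereal" where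
  "rho w n T = (if BC w n = 0 then (if TC w n T = 0 then 1 else \<infinity>)
                else ereal (TC w n T / BC w n))"

definition optimal :: "(nat \<Rightarrow> nat \<Rightarrow> real) \<Rightarrow> nat \<Rightarrow> hctree \<Rightarrow> bool" where
  "optimal w n T \<longleftrightarrow> is_hc_tree n T \<and> (\<forall>T'. is_hc_tree n T' \<longrightarrow> rho w n T \<le> rho w n T')"

definition random_graph :: "nat \<Rightarrow> (nat \<Rightarrow> nat \<Rightarrow> real) \<Rightarrow> (nat \<times> nat \<Rightarrow> bool) pmf" where
  "random_graph n P = Pi_pmf {(i, j). i < j \<and> j < n} False (\<lambda>(i, j). bernoulli_pmf (P i j))"

definition graph_weight :: "(nat \<times> nat \<Rightarrow> bool) \<Rightarrow> nat \<Rightarrow> nat \<Rightarrow> real" where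
  "graph_weight E i j = (if E (min i j, max i j) then 1 else 0)"

end

theory Submission
  imports Defs
begin

definition clusters :: "hctree \<Rightarrow> nat set set" where
  "clusters T = leaves ` subtrees T"

lemma split3_clusters: "split3 T i j k \<longleftrightarrow> (\<exists>C\<in>clusters T. i \<in> C \<and> j \<in> C \<and> k \<notin> C)"
  unfolding split3_def clusters_def by auto

lemma subtrees_self: "T \<in> subtrees T"
  by (cases T) auto

lemma subtree_infix: "S \<in> subtrees T \<Longrightarrow> \<exists>ps ss. leaf_list T = ps @ leaf_list S @ ss"
proof (induction T arbitrary: S)
  case (Leaf v)
  then show ?case by auto
next
  case (Node ts)
  show ?case
  proof (cases "S = Node ts")
    case True
    then show ?thesis by (metis append.left_neutral append_Nil2)
  next
    case False
    with Node.prems obtain t where t: "t \<in> set ts" "S \<in> subtrees t" by auto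
    from Node.IH[OF t] obtain ps ss where pss: "leaf_list t = ps @ leaf_list S @ ss" by blast
    from t(1) obtain us vs where "ts = us @ t # vs" by (meson split_list)
    then have "leaf_list (Node ts) = concat (map leaf_list us) @ leaf_list t @ concat (map leaf_list vs)"
      by simp
    with pss show ?thesis by (metis append.assoc)
  qed
qed

lemma wf_leaf_nonempty: "wf_tree T \<Longrightarrow> leaf_list T \<noteq> []"
proof (induction T)
  case (Leaf x)
  then show ?case by simp
next
  case (Node ts)
  then obtain t where "t \<in> set ts" by (cases ts) auto
  with Node show ?case by (auto simp: list_all_iff)
qed

lemma sum_set_le_sum_list: "(\<Sum>x\<in>set xs. (f x::nat)) \<le> sum_list (map f xs)"
proof -
  have "sum_list (map f xs) = (\<Sum>x\<in>set xs. count_list xs x * f x)"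
    by (rule sum_list_map_eq_sum_count)
  also have "\<dots> \<ge> (\<Sum>x\<in>set xs. f x)"
    by (intro sum_mono) (metis count_list_0_iff less_one mult_le_mono1 mult_1 not_le)
  finally show ?thesis .
qed

lemma clusters_Node: "clusters (Node ts) = insert (leaves (Node ts)) (\<Union>t\<in>set ts. clusters t)"
  unfolding clusters_def by auto

lemma leaves_Node: "leaves (Node ts) = (\<Union>t\<in>set ts. leaves t)"
  unfolding leaves_def by auto

lemma card_clusters: "wf_tree T \<Longrightarrow> finite (clusters T) \<and> card (clusters T) + 1 \<le> 2 * length (leaf_list T)"
proof (induction T)
  case (Leaf x)
  then show ?case by (simp add: clusters_def)
next
  case (Node ts)
  have IH: "\<And>t. t \<in> set ts \<Longrightarrow> finite (clusters t) \<and> card (clusters t) + 1 \<le> 2 * length (leaf_list t)"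
    using Node by (auto simp: list_all_iff)
  have ne: "ts \<noteq> []" using Node.prems by simp
  define U where "U = (\<Union>t\<in>set ts. clusters t)"
  have finU: "finite U" unfolding U_def using IH by auto
  have "card U \<le> (\<Sum>t\<in>set ts. card (clusters t))" unfolding U_def by (rule card_UN_le) simp
  moreover have "(\<Sum>t\<in>set ts. card (clusters t)) + card (set ts) = (\<Sum>t\<in>set ts. card (clusters t) + 1)"
    by (simp only: sum.distrib) simp
  moreover have "(\<Sum>t\<in>set ts. card (clusters t) + 1) \<le> (\<Sum>t\<in>set ts. 2 * length (leaf_list t))"
    by (intro sum_mono) (use IH in auto)
  moreover have "(\<Sum>t\<in>set ts. 2 * length (leaf_list t)) \<le> sum_list (map (\<lambda>t. 2 * length (leaf_list t)) ts)"
    by (rule sum_set_le_sum_list)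
  moreover have "sum_list (map (\<lambda>t. 2 * length (leaf_list t)) ts) = 2 * length (leaf_list (Node ts))"
    by (simp add: length_concat sum_list_const_mult o_def)
  ultimately have key: "card U + card (set ts) \<le> 2 * length (leaf_list (Node ts))" by linarith
  have cne: "card (set ts) \<ge> 1" using ne by (simp add: Suc_le_eq card_gt_0_iff)
  show ?case
  proof (cases "\<exists>t\<in>set ts. leaves t = leaves (Node ts)")
    case True
    then obtain t where "t \<in> set ts" "leaves t = leaves (Node ts)" by blast
    then have "leaves (Node ts) \<in> U" unfolding U_def clusters_def using subtrees_self by auto
    then have "clusters (Node ts) = U" unfolding clusters_Node U_def by auto
    then show ?thesis using key cne finU by simp
  next
    case False
    have "card (set ts) \<ge> 2"
    proof (rule ccontr)
      assume "\<not> card (set ts) \<ge> 2"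
      with cne have "card (set ts) = 1" by simp
      then obtain t where "set ts = {t}" by (meson card_1_singletonE)
      then have "leaves (Node ts) = leaves t" by (simp add: leaves_Node)
      with False \<open>set ts = {t}\<close> show False by auto
    qed
    moreover have "card (clusters (Node ts)) \<le> card U + 1"
      unfolding clusters_Node U_def[symmetric] using finU by (simp add: card_insert_if)
    ultimately show ?thesis using key finU by (simp add: clusters_Node U_def[symmetric])
  qed
qed

definition iv :: "nat list \<Rightarrow> nat \<times> nat \<Rightarrow> nat set" where
  "iv xs p = set (take (snd p) (drop (fst p) xs))"

lemma hc_length: "is_hc_tree n T \<Longrightarrow> length (leaf_list T) = n"
  unfolding is_hc_tree_def by (metis card_lessThan distinct_card)

lemma cluster_iv:
  assumes "is_hc_tree n T" "C \<in> clusters T"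
  shows "C \<in> iv (leaf_list T) ` ({..n} \<times> {..n})"
proof -
  from assms(2) obtain S where S: "S \<in> subtrees T" "C = leaves S" unfolding clusters_def by auto
  from subtree_infix[OF S(1)] obtain ps ss where e: "leaf_list T = ps @ leaf_list S @ ss" by blast
  have len: "length (leaf_list T) = n" using hc_length[OF assms(1)] .
  have "C = iv (leaf_list T) (length ps, length (leaf_list S))"
    unfolding iv_def S(2) leaves_def e by simp
  moreover have "(length ps, length (leaf_list S)) \<in> {..n} \<times> {..n}"
    using len e by auto
  ultimately show ?thesis by blast
qed

lemma list_of_set_len:
  assumes "finite R" "R \<noteq> {}" "card R \<le> m"
  shows "\<exists>L. set L = R \<and> length L = m"
proof -
  obtain xs where xs: "set xs = R" "distinct xs" using finite_distinct_list[OF assms(1)] by blast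
  have "length xs = card R" using xs distinct_card by fastforce
  moreover have "xs \<noteq> []" using xs assms(2) by auto
  ultimately show ?thesis using xs assms(3)
    by (intro exI[of _ "xs @ replicate (m - card R) (hd xs)"]) auto
qed

lemma clusters_count:
  "finite (clusters ` {T. is_hc_tree n T}) \<and>
   card (clusters ` {T. is_hc_tree n T}) \<le> n ^ n * ((n+1)^2) ^ (2*n)"
proof -
  define D where "D = {..n} \<times> {..n}"
  define XS where "XS = {xs. set xs \<subseteq> {..<n} \<and> length xs = n}"
  define LS where "LS = {L. set L \<subseteq> D \<and> length L = 2*n}"
  define \<Phi> where "\<Phi> = (\<lambda>(xs, L). iv xs ` set L)"
  have sub: "clusters ` {T. is_hc_tree n T} \<subseteq> \<Phi> ` (XS \<times> LS)"
  proof
    fix F assume "F \<in> clusters ` {T. is_hc_tree n T}"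
    then obtain T where T: "is_hc_tree n T" "F = clusters T" by auto
    define xs where "xs = leaf_list T"
    have wf: "wf_tree T" using T unfolding is_hc_tree_def by simp
    have cc: "finite (clusters T)" "card (clusters T) + 1 \<le> 2 * n"
      using card_clusters[OF wf] hc_length[OF T(1)] by auto
    have xsX: "xs \<in> XS" unfolding XS_def xs_def using T(1) hc_length[OF T(1)]
      unfolding is_hc_tree_def by auto
    define ch where "ch = (\<lambda>C. SOME p. p \<in> D \<and> iv xs p = C)"
    have ch: "ch C \<in> D \<and> iv xs (ch C) = C" if "C \<in> clusters T" for C
    proof -
      from cluster_iv[OF T(1) that] obtain p where "p \<in> D" "iv xs p = C"
        unfolding D_def xs_def by auto
      then show ?thesis unfolding ch_def by (metis (mono_tags, lifting) someI)
    qed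
    define R where "R = ch ` clusters T"
    have "leaves T \<in> clusters T" unfolding clusters_def using subtrees_self by auto
    then have Rne: "R \<noteq> {}" unfolding R_def by auto
    have Rfin: "finite R" unfolding R_def using cc by simp
    have "card R \<le> card (clusters T)" unfolding R_def using cc by (simp add: card_image_le)
    then have "card R \<le> 2 * n" using cc by simp
    then obtain L where L: "set L = R" "length L = 2 * n" using list_of_set_len Rne Rfin by blast
    have LL: "L \<in> LS" unfolding LS_def using L ch unfolding R_def by auto
    have "iv xs ` set L = clusters T" unfolding L R_def image_image using ch by auto
    then have "F = \<Phi> (xs, L)" unfolding \<Phi>_def T by simp
    then show "F \<in> \<Phi> ` (XS \<times> LS)" using xsX LL by blast
  qed
  have fD: "finite D" unfolding D_def by simp
  have cD: "card D = (n+1)^2" unfolding D_def by (simp add: power2_eq_square)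
  have fXS: "finite XS" unfolding XS_def by (rule finite_lists_length_eq) simp
  have fLS: "finite LS" unfolding LS_def by (rule finite_lists_length_eq) (rule fD)
  have cXS: "card XS = n ^ n" unfolding XS_def by (subst card_lists_length_eq) simp_all
  have cLS: "card LS = ((n+1)^2) ^ (2*n)" unfolding LS_def by (subst card_lists_length_eq) (simp_all add: fD cD)
  have "finite (\<Phi> ` (XS \<times> LS))" using fXS fLS by simp
  moreover have "card (\<Phi> ` (XS \<times> LS)) \<le> n ^ n * ((n+1)^2) ^ (2*n)"
    using card_image_le[of "XS \<times> LS" \<Phi>] fXS fLS cXS cLS by (simp add: card_cartesian_product)
  ultimately show ?thesis using sub by (meson card_mono finite_subset order_trans)
qed

definition Ed :: "nat \<Rightarrow> (nat \<times> nat) set" where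
  "Ed n = {(i, j). i < j \<and> j < n}"

definition delta :: "nat \<times> nat \<Rightarrow> nat \<Rightarrow> nat \<Rightarrow> real" where
  "delta e = (\<lambda>i j. if (i, j) = e then 1 else 0)"

definition acoef :: "nat \<Rightarrow> hctree \<Rightarrow> nat \<times> nat \<Rightarrow> real" where
  "acoef n T e = TC (delta e) n T"

lemma finite_Ed: "finite (Ed n)"
  by (rule finite_subset[of _ "{..<n} \<times> {..<n}"]) (auto simp: Ed_def)

lemma finite_triples: "finite (triples n)"
  by (rule finite_subset[of _ "{..<n} \<times> {..<n} \<times> {..<n}"]) (auto simp: triples_def)

lemma tcost_cong:
  assumes "w i j = w' i j" "w i k = w' i k" "w j k = w' j k"
  shows "tcost w T i j k = tcost w' T i j k"
  using assms by (simp add: tcost_def)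

lemma tcost_lin:
  "tcost (\<lambda>x y. \<Sum>e\<in>S. c e * g e x y) T i j k = (\<Sum>e\<in>S. c e * tcost (g e) T i j k)"
  unfolding tcost_def
  by (cases "split3 T i j k"; cases "split3 T i k j"; cases "split3 T j k i")
     (simp_all add: sum.distrib distrib_left)

lemma delta_sum:
  assumes "(i, j) \<in> Ed n"
  shows "(\<Sum>e\<in>Ed n. w (fst e) (snd e) * delta e i j) = w i j"
proof -
  have "(\<Sum>e\<in>Ed n. w (fst e) (snd e) * delta e i j) = (\<Sum>e\<in>Ed n. if e = (i, j) then w i j else 0)"
    by (intro sum.cong) (auto simp: delta_def)
  also have "\<dots> = w i j" using assms finite_Ed by simp
  finally show ?thesis .
qed

lemma TC_lin: "TC w n T = (\<Sum>e\<in>Ed n. w (fst e) (snd e) * acoef n T e)"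
proof -
  have "TC w n T = (\<Sum>(i, j, k)\<in>triples n. \<Sum>e\<in>Ed n. w (fst e) (snd e) * tcost (delta e) T i j k)"
    unfolding TC_def
  proof (intro sum.cong refl, clarify)
    fix i j k assume t: "(i, j, k) \<in> triples n"
    have "tcost w T i j k = tcost (\<lambda>x y. \<Sum>e\<in>Ed n. w (fst e) (snd e) * delta e x y) T i j k"
    proof (rule tcost_cong)
      have m: "(i, j) \<in> Ed n" "(i, k) \<in> Ed n" "(j, k) \<in> Ed n" using t by (auto simp: Ed_def triples_def)
      show "w i j = (\<Sum>e\<in>Ed n. w (fst e) (snd e) * delta e i j)" using delta_sum[OF m(1)] by simp
      show "w i k = (\<Sum>e\<in>Ed n. w (fst e) (snd e) * delta e i k)" using delta_sum[OF m(2)] by simp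
      show "w j k = (\<Sum>e\<in>Ed n. w (fst e) (snd e) * delta e j k)" using delta_sum[OF m(3)] by simp
    qed
    also have "\<dots> = (\<Sum>e\<in>Ed n. w (fst e) (snd e) * tcost (delta e) T i j k)"
      by (rule tcost_lin)
    finally show "tcost w T i j k = (\<Sum>e\<in>Ed n. w (fst e) (snd e) * tcost (delta e) T i j k)" .
  qed
  also have "\<dots> = (\<Sum>e\<in>Ed n. \<Sum>(i, j, k)\<in>triples n. w (fst e) (snd e) * tcost (delta e) T i j k)"
    by (subst sum.swap) (simp add: case_prod_unfold)
  also have "\<dots> = (\<Sum>e\<in>Ed n. w (fst e) (snd e) * acoef n T e)"
    unfolding acoef_def TC_def by (simp add: sum_distrib_left case_prod_unfold)
  finally show ?thesis .
qed

lemma tcost_nonneg: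
  assumes "w i j \<ge> 0" "w i k \<ge> 0" "w j k \<ge> 0"
  shows "tcost w T i j k \<ge> 0"
  using assms by (simp add: tcost_def)

lemma tcost_le_sum:
  assumes "w i j \<ge> 0" "w i k \<ge> 0" "w j k \<ge> 0"
  shows "tcost w T i j k \<le> w i j + w i k + w j k"
  using assms by (simp add: tcost_def)

lemma tcost_ge_min:
  assumes "w i j \<ge> 0" "w i k \<ge> 0" "w j k \<ge> 0"
  shows "min (min (w i j + w i k) (w i j + w j k)) (w i k + w j k) \<le> tcost w T i j k"
  using assms by (simp add: tcost_def min_le_iff_disj)

lemma acoef_nonneg: "acoef n T e \<ge> 0"
  unfolding acoef_def TC_def
  by (intro sum_nonneg) (auto intro!: tcost_nonneg simp: delta_def)

lemma sum_ind_le: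
  assumes "\<And>t. t \<in> triples n \<Longrightarrow> P t \<Longrightarrow> t \<in> h ` {..<n}"
  shows "(\<Sum>t\<in>triples n. if P t then 1 else 0 :: real) \<le> n"
proof -
  have "(\<Sum>t\<in>triples n. if P t then 1 else 0 :: real) = real (card {t \<in> triples n. P t})"
    by (simp add: sum.If_cases finite_triples Int_def)
  also have "{t \<in> triples n. P t} \<subseteq> h ` {..<n}" using assms by auto
  then have "card {t \<in> triples n. P t} \<le> card (h ` {..<n})" by (intro card_mono) auto
  also have "\<dots> \<le> n" using card_image_le[of "{..<n}" h] by simp
  finally show ?thesis by simp
qed

lemma acoef_le: "acoef n T e \<le> 3 * n"
proof -
  obtain a b where e: "e = (a, b)" by fastforce
  have "acoef n T e \<le> (\<Sum>t\<in>triples n. (if (fst t, fst (snd t)) = e then 1 else 0)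
        + (if (fst t, snd (snd t)) = e then 1 else 0) + (if (fst (snd t), snd (snd t)) = e then 1 else 0))"
    unfolding acoef_def TC_def
  proof (intro sum_mono, clarify)
    fix i j k
    have "tcost (delta e) T i j k \<le> delta e i j + delta e i k + delta e j k"
      by (rule tcost_le_sum) (simp_all add: delta_def)
    then show "tcost (delta e) T i j k \<le> (if (fst (i, j, k), fst (snd (i, j, k))) = e then 1 else 0) +
         (if (fst (i, j, k), snd (snd (i, j, k))) = e then 1 else 0) +
         (if (fst (snd (i, j, k)), snd (snd (i, j, k))) = e then 1 else 0)"
      by (simp add: delta_def)
  qed
  also have "\<dots> = (\<Sum>t\<in>triples n. if (fst t, fst (snd t)) = e then 1 else 0)
        + (\<Sum>t\<in>triples n. if (fst t, snd (snd t)) = e then 1 else 0)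
        + (\<Sum>t\<in>triples n. if (fst (snd t), snd (snd t)) = e then 1 else 0)"
    by (simp only: sum.distrib)
  also have "\<dots> \<le> real n + real n + real n"
  proof (intro add_mono)
    show "(\<Sum>t\<in>triples n. if (fst t, fst (snd t)) = e then 1 else 0) \<le> real n"
      by (rule sum_ind_le[where h = "\<lambda>k. (a, b, k)"]) (force simp: e triples_def)
    show "(\<Sum>t\<in>triples n. if (fst t, snd (snd t)) = e then 1 else 0) \<le> real n"
      by (rule sum_ind_le[where h = "\<lambda>k. (a, k, b)"]) (force simp: e triples_def)
    show "(\<Sum>t\<in>triples n. if (fst (snd t), snd (snd t)) = e then 1 else 0) \<le> real n"
      by (rule sum_ind_le[where h = "\<lambda>k. (k, a, b)"]) (force simp: e triples_def)
  qed
  finally show ?thesis by simp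
qed

lemma tcost_clusters: "clusters T = clusters T' \<Longrightarrow> tcost w T i j k = tcost w T' i j k"
  unfolding tcost_def split3_clusters by (simp only:)

lemma acoef_clusters: "clusters T = clusters T' \<Longrightarrow> acoef n T = acoef n T'"
proof -
  assume h: "clusters T = clusters T'"
  show ?thesis
    unfolding acoef_def TC_def using tcost_clusters[OF h] by (intro ext sum.cong refl) (simp add: case_prod_unfold)
qed

lemma TC_ge_BC:
  assumes "\<And>i j. i < j \<Longrightarrow> j < n \<Longrightarrow> w i j \<ge> 0"
  shows "BC w n \<le> TC w n T"
  unfolding BC_def TC_def
  by (intro sum_mono) (auto intro!: tcost_ge_min assms simp: triples_def)

lemma BC_nonneg:
  assumes "\<And>i j. i < j \<Longrightarrow> j < n \<Longrightarrow> w i j \<ge> 0"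
  shows "BC w n \<ge> 0"
  unfolding BC_def
  by (intro sum_nonneg) (auto intro!: add_nonneg_nonneg assms simp: triples_def)

definition ind :: "bool \<Rightarrow> real" where "ind b = (if b then 1 else 0)"

lemma random_graph_Ed: "random_graph n Pn = Pi_pmf (Ed n) False (\<lambda>e. bernoulli_pmf (Pn (fst e) (snd e)))"
  unfolding random_graph_def Ed_def by (simp add: case_prod_unfold)

lemma expectation_comp:
  assumes "e \<in> Ed n" "0 \<le> Pn (fst e) (snd e)" "Pn (fst e) (snd e) \<le> 1"
  shows "measure_pmf.expectation (random_graph n Pn) (\<lambda>X. c * ind (X e)) = c * Pn (fst e) (snd e)"
proof -
  have "measure_pmf.expectation (random_graph n Pn) (\<lambda>X. c * ind (X e)) =
        measure_pmf.expectation (map_pmf (\<lambda>X. X e) (random_graph n Pn)) (\<lambda>b. c * ind b)"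
    by simp
  also have "map_pmf (\<lambda>X. X e) (random_graph n Pn) = bernoulli_pmf (Pn (fst e) (snd e))"
    unfolding random_graph_Ed using assms(1) by (subst Pi_pmf_component) (auto simp: finite_Ed)
  also have "measure_pmf.expectation \<dots> (\<lambda>b. c * ind b) = c * Pn (fst e) (snd e)"
    using assms(2,3) by (simp add: ind_def)
  finally show ?thesis .
qed

lemma hoeff:
  fixes Pn :: "nat \<Rightarrow> nat \<Rightarrow> real" and a :: "nat \<times> nat \<Rightarrow> real"
  assumes a: "\<And>e. e \<in> Ed n \<Longrightarrow> 0 \<le> a e \<and> a e \<le> A"
    and p: "\<And>e. e \<in> Ed n \<Longrightarrow> 0 \<le> Pn (fst e) (snd e) \<and> Pn (fst e) (snd e) \<le> 1"
    and t: "t > 0"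
  shows "measure_pmf.prob (random_graph n Pn)
           {X. t \<le> \<bar>\<Sum>e\<in>Ed n. a e * (ind (X e) - Pn (fst e) (snd e))\<bar>}
         \<le> 2 * exp (- 2 * t\<^sup>2 / (real (card (Ed n)) * A\<^sup>2))"
proof -
  define Y where "Y = (\<lambda>e X. a e * ind (X e))"
  define \<mu> where "\<mu> = (\<Sum>e\<in>Ed n. measure_pmf.expectation (random_graph n Pn) (Y e))"
  have \<mu>: "\<mu> = (\<Sum>e\<in>Ed n. a e * Pn (fst e) (snd e))"
    unfolding \<mu>_def Y_def using p by (intro sum.cong refl expectation_comp) auto
  have eqs: "(\<Sum>e\<in>Ed n. a e * (ind (X e) - Pn (fst e) (snd e))) = (\<Sum>e\<in>Ed n. Y e X) - \<mu>" for X
    unfolding \<mu> Y_def by (simp add: sum_subtractf right_diff_distrib)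
  show ?thesis
  proof (cases "(\<Sum>e\<in>Ed n. (a e - 0)\<^sup>2) > 0")
    case False
    have "\<forall>e\<in>Ed n. (a e - 0)\<^sup>2 = 0"
    proof -
      have "(\<Sum>e\<in>Ed n. (a e - 0)\<^sup>2) \<ge> 0" by (intro sum_nonneg) simp
      then have "(\<Sum>e\<in>Ed n. (a e - 0)\<^sup>2) = 0" using False by linarith
      then show ?thesis using finite_Ed by (subst (asm) sum_nonneg_eq_0_iff) auto
    qed
    then have "\<forall>e\<in>Ed n. a e = 0" by simp
    then have "{X. t \<le> \<bar>\<Sum>e\<in>Ed n. a e * (ind (X e) - Pn (fst e) (snd e))\<bar>} = {}"
      using t by auto
    then show ?thesis by simp
  next
    case True
    interpret H: Hoeffding_ineq "measure_pmf (random_graph n Pn)" "Ed n" Y "\<lambda>_. 0" a \<mu>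
    proof unfold_locales
      show "finite (Ed n)" by (rule finite_Ed)
      show "prob_space.indep_vars (measure_pmf (random_graph n Pn)) (\<lambda>_. borel) Y (Ed n)"
        unfolding random_graph_Ed Y_def
        by (intro prob_space.indep_vars_compose2[OF _ indep_vars_Pi_pmf[OF finite_Ed]])
           (auto simp: measure_pmf.prob_space_axioms)
      show "AE x in measure_pmf (random_graph n Pn). Y e x \<in> {0..a e}" if "e \<in> Ed n" for e
        using a[OF that] by (intro AE_I2) (auto simp: Y_def ind_def)
      show "\<mu> \<equiv> \<Sum>e\<in>Ed n. prob_space.expectation (measure_pmf (random_graph n Pn)) (Y e)"
        unfolding \<mu>_def by simp
    qed
    have "measure_pmf.prob (random_graph n Pn)
           {X. t \<le> \<bar>\<Sum>e\<in>Ed n. a e * (ind (X e) - Pn (fst e) (snd e))\<bar>}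
          = measure_pmf.prob (random_graph n Pn) {x \<in> space (measure_pmf (random_graph n Pn)). \<bar>(\<Sum>e\<in>Ed n. Y e x) - \<mu>\<bar> \<ge> t}"
      unfolding eqs by simp
    also have "\<dots> \<le> 2 * exp (-2 * t\<^sup>2 / (\<Sum>e\<in>Ed n. (a e - 0)\<^sup>2))"
      using H.Hoeffding_ineq_abs_ge[of t] t True by simp
    also have "\<dots> \<le> 2 * exp (- 2 * t\<^sup>2 / (real (card (Ed n)) * A\<^sup>2))"
    proof -
      have "(\<Sum>e\<in>Ed n. (a e - 0)\<^sup>2) \<le> (\<Sum>e\<in>Ed n. A\<^sup>2)"
        using a by (intro sum_mono) (auto intro: power_mono)
      then have S: "(\<Sum>e\<in>Ed n. (a e - 0)\<^sup>2) \<le> real (card (Ed n)) * A\<^sup>2" by simp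
      have "2 * t\<^sup>2 / (real (card (Ed n)) * A\<^sup>2) \<le> 2 * t\<^sup>2 / (\<Sum>e\<in>Ed n. (a e - 0)\<^sup>2)"
        using True S t by (intro divide_left_mono) auto
      then show ?thesis by simp
    qed
    finally show ?thesis .
  qed
qed

lemma gw_Ed: "e \<in> Ed n \<Longrightarrow> graph_weight X (fst e) (snd e) = ind (X e)"
  by (cases e) (auto simp: Ed_def graph_weight_def ind_def min_def max_def)

lemma gw_nonneg: "graph_weight X i j \<ge> 0"
  by (simp add: graph_weight_def)

lemma TC_diff:
  "TC (graph_weight X) n T - TC Pn n T = (\<Sum>e\<in>Ed n. acoef n T e * (ind (X e) - Pn (fst e) (snd e)))"
proof -
  have "TC (graph_weight X) n T = (\<Sum>e\<in>Ed n. ind (X e) * acoef n T e)"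
    unfolding TC_lin[of "graph_weight X"] by (intro sum.cong refl) (simp add: gw_Ed)
  moreover have "TC Pn n T = (\<Sum>e\<in>Ed n. Pn (fst e) (snd e) * acoef n T e)" by (rule TC_lin)
  ultimately have "TC (graph_weight X) n T - TC Pn n T =
      (\<Sum>e\<in>Ed n. ind (X e) * acoef n T e) - (\<Sum>e\<in>Ed n. Pn (fst e) (snd e) * acoef n T e)" by simp
  also have "\<dots> = (\<Sum>e\<in>Ed n. ind (X e) * acoef n T e - Pn (fst e) (snd e) * acoef n T e)"
    by (rule sum_subtractf[symmetric])
  also have "\<dots> = (\<Sum>e\<in>Ed n. acoef n T e * (ind (X e) - Pn (fst e) (snd e)))"
    by (intro sum.cong refl) (simp add: algebra_simps)
  finally show ?thesis .
qed

lemma acoef_le': "acoef n T e \<le> 3 * real n"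
  using acoef_le[of n T e] by simp

lemma BC_zero_term:
  assumes BC0: "BC w n = 0" and nn: "\<And>i j. w i j \<ge> 0" and t: "(i, j, k) \<in> triples n"
  shows "min (min (w i j + w i k) (w i j + w j k)) (w i k + w j k) = 0"
proof -
  let ?f = "\<lambda>(i::nat, j::nat, k::nat). min (min (w i j + w i k) (w i j + w j k)) (w i k + w j k)"
  have s0: "(\<Sum>t\<in>triples n. ?f t) = 0" using BC0 unfolding BC_def .
  have nn': "\<And>t. t \<in> triples n \<Longrightarrow> 0 \<le> ?f t"
  proof -
    fix t :: "nat \<times> nat \<times> nat"
    obtain a b c where "t = (a, b, c)" by (cases t) auto
    then show "0 \<le> ?f t" using nn[of a b] nn[of a c] nn[of b c] by simp
  qed
  have "?f (i, j, k) = 0" by (rule sum_nonneg_0[OF finite_triples nn' s0 t])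
  then show ?thesis by simp
qed

lemma BC_zero_deg:
  assumes BC0: "BC (graph_weight X) n = 0" and i: "i < n"
  shows "card {j \<in> {i<..<n}. X (i, j)} \<le> 1"
proof -
  let ?w = "graph_weight X"
  have "\<forall>a\<in>{j \<in> {i<..<n}. X (i, j)}. \<forall>b\<in>{j \<in> {i<..<n}. X (i, j)}. a = b"
  proof (intro ballI, rule ccontr)
    fix a b assume a: "a \<in> {j \<in> {i<..<n}. X (i, j)}" and b: "b \<in> {j \<in> {i<..<n}. X (i, j)}" and ne: "a \<noteq> b"
    have "\<exists>j k. i < j \<and> j < k \<and> k < n \<and> X (i, j) \<and> X (i, k)"
    proof (cases "a < b")
      case True then show ?thesis using a b by (intro exI[of _ a] exI[of _ b]) simp
    next
      case False then have "b < a" using ne by simp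
      then show ?thesis using a b by (intro exI[of _ b] exI[of _ a]) simp
    qed
    then obtain j k where jk: "i < j" "j < k" "k < n" "X (i, j)" "X (i, k)" by blast
    then have t: "(i, j, k) \<in> triples n" by (simp add: triples_def)
    have z: "min (min (?w i j + ?w i k) (?w i j + ?w j k)) (?w i k + ?w j k) = 0"
      by (rule BC_zero_term[OF BC0 gw_nonneg t])
    have w1: "?w i j = 1" "?w i k = 1" using jk by (auto simp: graph_weight_def min_def max_def)
    have w3: "?w j k \<ge> 0" by (rule gw_nonneg)
    show False using z w1 w3 by linarith
  qed
  then show ?thesis using card_le_Suc0_iff_eq[of "{j \<in> {i<..<n}. X (i, j)}"] by simp
qed

lemma BC_zero_TC:
  assumes BC0: "BC (graph_weight X) n = 0"
  shows "TC (graph_weight X) n T \<le> 3 * real n * real n"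
proof -
  have Ed: "Ed n = Sigma {..<n} (\<lambda>i. {i<..<n})" by (auto simp: Ed_def)
  have "TC (graph_weight X) n T = (\<Sum>e\<in>Ed n. ind (X e) * acoef n T e)"
    unfolding TC_lin[of "graph_weight X"] by (intro sum.cong refl) (simp add: gw_Ed)
  also have "\<dots> \<le> (\<Sum>e\<in>Ed n. ind (X e) * (3 * real n))"
    by (intro sum_mono mult_left_mono) (auto simp: acoef_le' ind_def)
  also have "\<dots> = 3 * real n * (\<Sum>e\<in>Ed n. ind (X e))"
    by (simp add: sum_distrib_left mult_ac)
  also have "(\<Sum>e\<in>Ed n. ind (X e)) \<le> real n"
  proof -
    have "(\<Sum>e\<in>Ed n. ind (X e)) = (\<Sum>i<n. \<Sum>j\<in>{i<..<n}. ind (X (i, j)))"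
      unfolding Ed by (subst sum.Sigma) auto
    also have "\<dots> \<le> (\<Sum>i<n. 1)"
    proof (intro sum_mono)
      fix i assume i: "i \<in> {..<n}"
      have "(\<Sum>j\<in>{i<..<n}. ind (X (i, j))) = real (card {j \<in> {i<..<n}. X (i, j)})"
        by (simp add: ind_def sum.If_cases Int_def)
      also have "\<dots> \<le> 1" using BC_zero_deg[OF BC0, of i] i by simp
      finally show "(\<Sum>j\<in>{i<..<n}. ind (X (i, j))) \<le> 1" .
    qed
    finally show ?thesis by simp
  qed
  then have "3 * real n * (\<Sum>e\<in>Ed n. ind (X e)) \<le> 3 * real n * real n"
    by (intro mult_left_mono) auto
  finally show ?thesis .
qed

lemma card_triples_ge: "(n div 3) ^ 3 \<le> card (triples n)"
proof -
  define m where "m = n div 3"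
  define g :: "nat \<times> nat \<times> nat \<Rightarrow> nat \<times> nat \<times> nat" where "g = (\<lambda>(i, j, k). (i, m + j, 2 * m + k))"
  have "inj_on g ({..<m} \<times> {..<m} \<times> {..<m})" unfolding g_def by (auto simp: inj_on_def)
  moreover have "g ` ({..<m} \<times> {..<m} \<times> {..<m}) \<subseteq> triples n"
    unfolding g_def triples_def m_def by auto
  ultimately have "card ({..<m} \<times> {..<m} \<times> {..<m}) \<le> card (triples n)"
    using finite_triples by (intro card_inj_on_le) auto
  then show ?thesis unfolding m_def by (simp add: card_cartesian_product power3_eq_cube)
qed

lemma sqrt_id: "real n > 0 \<Longrightarrow> real n ^ 3 * sqrt (ln (real n) / real n) = real n ^ 2 * sqrt (real n * ln (real n))"
proof -
  assume n: "real n > 0"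
  have "real n * ln (real n) = (real n)\<^sup>2 * (ln (real n) / real n)" using n by (simp add: power2_eq_square)
  then have "sqrt (real n * ln (real n)) = sqrt ((real n)\<^sup>2) * sqrt (ln (real n) / real n)"
    by (simp only: real_sqrt_mult)
  then have "sqrt (real n * ln (real n)) = real n * sqrt (ln (real n) / real n)"
    by simp
  then show ?thesis by (simp add: power3_eq_cube power2_eq_square)
qed

lemma BC_lower:
  fixes Pn :: "nat \<Rightarrow> nat \<Rightarrow> real"
  assumes n: "n \<ge> 4" and c: "c > 0"
    and d: "\<forall>i<n. \<forall>j<n. i \<noteq> j \<longrightarrow> c * sqrt (ln (real n) / real n) \<le> Pn i j"
  shows "BC Pn n \<ge> c * real n ^ 2 * sqrt (real n * ln (real n)) / 108"
proof -
  define s where "s = c * sqrt (ln (real n) / real n)"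
  have s0: "s \<ge> 0" unfolding s_def using c n by simp
  have "BC Pn n \<ge> (\<Sum>t\<in>triples n. 2 * s)"
    unfolding BC_def
  proof (intro sum_mono, clarify)
    fix i j k assume "(i, j, k) \<in> triples n"
    then have "i < j" "j < k" "k < n" by (auto simp: triples_def)
    then have "s \<le> Pn i j" "s \<le> Pn i k" "s \<le> Pn j k" using d unfolding s_def by auto
    then show "2 * s \<le> min (min (Pn i j + Pn i k) (Pn i j + Pn j k)) (Pn i k + Pn j k)" by simp
  qed
  also have "(\<Sum>t\<in>triples n. 2 * s) = real (card (triples n)) * (2 * s)" by simp
  finally have b1: "BC Pn n \<ge> real (card (triples n)) * (2 * s)" .
  have "6 * (n div 3) \<ge> n" using n by linarith
  then have "real (n div 3) \<ge> real n / 6" by linarith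
  then have "real (n div 3) ^ 3 \<ge> (real n / 6) ^ 3" by (intro power_mono) auto
  moreover have "real (card (triples n)) \<ge> real (n div 3) ^ 3"
    using card_triples_ge[of n] by (metis of_nat_le_iff of_nat_power)
  ultimately have "real (card (triples n)) \<ge> (real n / 6) ^ 3" by linarith
  then have "BC Pn n \<ge> (real n / 6) ^ 3 * (2 * s)"
    using b1 s0 by (meson mult_right_mono order_trans zero_le_mult_iff zero_le_numeral)
  also have "(real n / 6) ^ 3 * (2 * s) = c * (real n ^ 3 * sqrt (ln (real n) / real n)) / 108"
    unfolding s_def by (simp add: power_divide)
  also have "\<dots> = c * real n ^ 2 * sqrt (real n * ln (real n)) / 108"
    using sqrt_id[of n] n by simp
  finally show ?thesis by simp
qed

lemma rho_pos: "BC w n > 0 \<Longrightarrow> rho w n T \<le> rho w n T' \<longleftrightarrow> TC w n T \<le> TC w n T'"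
  unfolding rho_def by (simp add: divide_right_mono divide_le_cancel)

lemma ln_ge: "n \<ge> 4 \<Longrightarrow> ln (real n) \<ge> 3 / 4"
proof -
  assume n: "n \<ge> 4"
  have "ln (1 / real n) \<le> 1 / real n - 1" using n by (intro ln_le_minus_one) auto
  then have "ln (real n) \<ge> 1 - 1 / real n" using n by (simp add: ln_div)
  moreover have "1 / real n \<le> 1 / 4" using n by (simp add: divide_simps)
  ultimately show ?thesis by linarith
qed

lemma numeric:
  fixes C cE :: real
  assumes n: "n \<ge> 4" and C: "C \<le> real (n ^ n * ((n + 1)\<^sup>2) ^ (2 * n))"
    and cE: "0 < cE" "cE \<le> (real n)\<^sup>2"
    and t: "t = 12 * real n ^ 2 * sqrt (real n * ln (real n))"
  shows "C * (2 * exp (- 2 * t\<^sup>2 / (cE * (3 * real n)\<^sup>2))) < 1 / real n"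
proof -
  define L where "L = ln (real n)"
  have L: "L \<ge> 3 / 4" unfolding L_def using ln_ge[OF n] .
  have npos: "real n > 0" using n by simp
  have pw: "real n ^ k = exp (real k * L)" for k
    unfolding L_def using npos by (simp add: exp_of_nat_mult)
  have "real (n ^ n * ((n + 1)\<^sup>2) ^ (2 * n)) = real n ^ n * ((real n + 1)\<^sup>2) ^ (2 * n)"
    by (simp add: add.commute)
  also have "\<dots> \<le> real n ^ n * (((real n)\<^sup>2)\<^sup>2) ^ (2 * n)"
  proof (intro mult_left_mono power_mono)
    have "real n * real n \<ge> 4 * real n" using n by (intro mult_right_mono) auto
    then show "real n + 1 \<le> (real n)\<^sup>2" using n unfolding power2_eq_square by linarith
  qed auto
  also have "\<dots> = real n ^ (n + 2 * 2 * (2 * n))" by (simp only: power_mult power_add)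
  also have "n + 2 * 2 * (2 * n) = 9 * n" by simp
  also have "real n ^ (9 * n) = exp (9 * real n * L)" by (simp add: pw)
  finally have C2: "C \<le> exp (9 * real n * L)" using C by linarith
  have nl: "real n * L \<ge> 0" using npos L by simp
  have tt: "t\<^sup>2 = 144 * real n ^ 5 * L"
  proof -
    have "t\<^sup>2 = 144 * (real n ^ 2)\<^sup>2 * (sqrt (real n * L))\<^sup>2" unfolding t L_def by (simp add: power_mult_distrib)
    also have "(sqrt (real n * L))\<^sup>2 = real n * L" using nl by simp
    also have "144 * (real n ^ 2)\<^sup>2 * (real n * L) = 144 * real n ^ 5 * L" by algebra
    finally show ?thesis .
  qed
  have D: "(real n)\<^sup>2 * (3 * real n)\<^sup>2 = 9 * real n ^ 4" by algebra
  have Dpos: "9 * real n ^ 4 > 0" using npos by simp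
  have q1: "2 * t\<^sup>2 / (cE * (3 * real n)\<^sup>2) \<ge> 2 * t\<^sup>2 / ((real n)\<^sup>2 * (3 * real n)\<^sup>2)"
    using cE npos by (intro divide_left_mono mult_right_mono mult_pos_pos) auto
  have tt2: "2 * t\<^sup>2 = (32 * real n * L) * (9 * real n ^ 4)" unfolding tt by algebra
  have q2: "2 * t\<^sup>2 / ((real n)\<^sup>2 * (3 * real n)\<^sup>2) = 32 * real n * L"
    unfolding tt2 D using Dpos by simp
  have q3: "- 2 * t\<^sup>2 / (cE * (3 * real n)\<^sup>2) = - (2 * t\<^sup>2 / (cE * (3 * real n)\<^sup>2))" by simp
  have e0: "- 2 * t\<^sup>2 / (cE * (3 * real n)\<^sup>2) \<le> - (32 * real n * L)"
    using q1 q2 q3 by linarith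
  have e1: "exp (- 2 * t\<^sup>2 / (cE * (3 * real n)\<^sup>2)) \<le> exp (- (32 * real n * L))"
    using e0 by simp
  have "C * (2 * exp (- 2 * t\<^sup>2 / (cE * (3 * real n)\<^sup>2))) \<le> exp (9 * real n * L) * (2 * exp (- (32 * real n * L)))"
    using C2 e1 by (intro mult_mono) auto
  also have "\<dots> = 2 * (exp (9 * real n * L) * exp (- (32 * real n * L)))" by simp
  also have "exp (9 * real n * L) * exp (- (32 * real n * L)) = exp (9 * real n * L + - (32 * real n * L))"
    by (simp only: exp_add)
  also have "9 * real n * L + - (32 * real n * L) = - (23 * real n * L)" by simp
  also have "2 * exp (- (23 * real n * L)) < exp (- L)"
  proof -
    have "real n * L \<ge> 4 * L" using n L by (intro mult_right_mono) auto
    then have x: "23 * real n * L - L > 1" using L by linarith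
    then have "exp (23 * real n * L - L) > 2" using exp_ge_add_one_self[of "23 * real n * L - L"] by linarith
    then have "2 * exp (- (23 * real n * L)) < exp (23 * real n * L - L) * exp (- (23 * real n * L))"
      by (intro mult_strict_right_mono) auto
    also have "\<dots> = exp (23 * real n * L - L + - (23 * real n * L))" by (simp only: exp_add)
    also have "23 * real n * L - L + - (23 * real n * L) = - L" by simp
    finally show ?thesis .
  qed
  also have "exp (- L) = 1 / real n" unfolding L_def using npos by (simp add: exp_minus inverse_eq_divide)
  finally show ?thesis .
qed

lemma main_step:
  fixes Pn :: "nat \<Rightarrow> nat \<Rightarrow> real" and t :: real
  assumes n: "n \<ge> 4"
    and range: "\<And>i j. i < n \<Longrightarrow> j < n \<Longrightarrow> 0 \<le> Pn i j \<and> Pn i j \<le> 1"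
    and BCpos: "BC Pn n > 0"
    and tdef: "t = 12 * real n ^ 2 * sqrt (real n * ln (real n))"
    and small: "8 * t \<le> BC Pn n"
  shows "measure_pmf.prob (random_graph n Pn)
           {E. \<forall>T Tb. optimal (graph_weight E) n T \<longrightarrow> optimal Pn n Tb \<longrightarrow>
              \<bar>TC (graph_weight E) n T - TC Pn n Tb\<bar> \<le> (2 * t / BC Pn n) * TC Pn n Tb}
         > 1 - real n powr (- 1)"
proof -
  define H where "H = {T. is_hc_tree n T}"
  define A where "A = (\<lambda>T. acoef n T) ` H"
  define h where "h F = acoef n (SOME T. T \<in> H \<and> clusters T = F)" for F
  have Ah: "A \<subseteq> h ` (clusters ` H)"
  proof
    fix a assume "a \<in> A"
    then obtain T where T: "T \<in> H" "a = acoef n T" unfolding A_def by auto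
    have ex: "\<exists>T'. T' \<in> H \<and> clusters T' = clusters T" using T by blast
    have "clusters (SOME T'. T' \<in> H \<and> clusters T' = clusters T) = clusters T" using someI_ex[OF ex] by blast
    then have "h (clusters T) = acoef n T" unfolding h_def by (rule acoef_clusters)
    then show "a \<in> h ` clusters ` H" using T by force
  qed
  have cc: "finite (clusters ` H)" "card (clusters ` H) \<le> n ^ n * ((n + 1)\<^sup>2) ^ (2 * n)"
    using clusters_count[of n] unfolding H_def by auto
  have finA: "finite A" using Ah cc by (meson finite_imageI finite_subset)
  have cardA: "card A \<le> n ^ n * ((n + 1)\<^sup>2) ^ (2 * n)"
    using card_mono[OF finite_imageI[OF cc(1)] Ah] card_image_le[OF cc(1), of h] cc(2) by linarith
  define bad where "bad a = {X. t \<le> \<bar>\<Sum>e\<in>Ed n. a e * (ind (X e) - Pn (fst e) (snd e))\<bar>}" for a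
  define Bad where "Bad = (\<Union>a\<in>A. bad a)"
  define K where "K = 2 * exp (- 2 * t\<^sup>2 / (real (card (Ed n)) * (3 * real n)\<^sup>2))"
  have npos: "real n > 0" using n by simp
  have L: "ln (real n) \<ge> 3 / 4" using ln_ge[OF n] .
  have nl1: "real n * ln (real n) \<ge> 1"
  proof -
    have "real n * ln (real n) \<ge> 4 * (3 / 4)" using n L by (intro mult_mono) auto
    then show ?thesis by simp
  qed
  have sq1: "sqrt (real n * ln (real n)) \<ge> 1" using nl1 by simp
  have t12: "t \<ge> 12 * real n ^ 2" unfolding tdef using sq1 npos
    by (metis mult.right_neutral mult_left_mono zero_le_power zero_le_mult_iff zero_le_numeral of_nat_0_le_iff)
  have tpos: "t > 0" using t12 npos by (smt (verit) zero_less_power)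
  have EdS: "Ed n \<subseteq> {..<n} \<times> {..<n}" by (auto simp: Ed_def)
  have cE: "0 < real (card (Ed n))" "real (card (Ed n)) \<le> (real n)\<^sup>2"
  proof -
    have "(0, 1) \<in> Ed n" using n by (simp add: Ed_def)
    then show "0 < real (card (Ed n))" using finite_Ed by (simp add: card_gt_0_iff) blast
    have "card (Ed n) \<le> card ({..<n} \<times> {..<n})" by (intro card_mono EdS) simp
    then show "real (card (Ed n)) \<le> (real n)\<^sup>2" by (simp add: card_cartesian_product power2_eq_square) (metis of_nat_le_iff of_nat_mult)
  qed
  have each: "measure_pmf.prob (random_graph n Pn) (bad a) \<le> K" if a: "a \<in> A" for a
  proof -
    from a obtain T where T: "a = acoef n T" unfolding A_def by auto
    show ?thesis unfolding bad_def K_def T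
    proof (rule hoeff)
      show "0 \<le> acoef n T e \<and> acoef n T e \<le> 3 * real n" for e using acoef_nonneg acoef_le' by auto
      show "0 \<le> Pn (fst e) (snd e) \<and> Pn (fst e) (snd e) \<le> 1" if "e \<in> Ed n" for e
        using that range by (auto simp: Ed_def)
      show "t > 0" by (rule tpos)
    qed
  qed
  have pB: "measure_pmf.prob (random_graph n Pn) Bad \<le> real (card A) * K"
  proof -
    have "measure_pmf.prob (random_graph n Pn) Bad \<le> (\<Sum>a\<in>A. measure_pmf.prob (random_graph n Pn) (bad a))"
      unfolding Bad_def by (rule measure_pmf.finite_measure_subadditive_finite[OF finA]) simp
    also have "\<dots> \<le> real (card A) * K" by (rule sum_bounded_above) (rule each)
    finally show ?thesis .
  qed
  have "real (card A) * K < 1 / real n"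
    unfolding K_def
    by (rule numeric[OF n _ cE tdef]) (use cardA in \<open>simp only: of_nat_le_iff\<close>)
  with pB have pB': "measure_pmf.prob (random_graph n Pn) Bad < 1 / real n" by linarith
  have good: "UNIV - Bad \<subseteq> {E. \<forall>T Tb. optimal (graph_weight E) n T \<longrightarrow> optimal Pn n Tb \<longrightarrow>
              \<bar>TC (graph_weight E) n T - TC Pn n Tb\<bar> \<le> (2 * t / BC Pn n) * TC Pn n Tb}"
  proof (intro subsetI CollectI allI impI)
    fix X T Tb
    assume X: "X \<in> UNIV - Bad" and oT: "optimal (graph_weight X) n T" and oTb: "optimal Pn n Tb"
    have dev: "\<bar>TC (graph_weight X) n T' - TC Pn n T'\<bar> < t" if T': "T' \<in> H" for T'
    proof -
      have "acoef n T' \<in> A" using T' unfolding A_def by blast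
      then have "X \<notin> bad (acoef n T')" using X unfolding Bad_def by blast
      then show ?thesis unfolding bad_def TC_diff by simp
    qed
    have hT: "T \<in> H" and hTb: "Tb \<in> H" using oT oTb unfolding optimal_def H_def by auto
    have Pnn: "\<And>i j. i < j \<Longrightarrow> j < n \<Longrightarrow> 0 \<le> Pn i j" using range by force
    have TCb_le: "TC Pn n Tb \<le> TC Pn n T"
      using oTb hT rho_pos[OF BCpos] unfolding optimal_def H_def by blast
    have BCb: "BC Pn n \<le> TC Pn n Tb" by (rule TC_ge_BC) (rule Pnn)
    have BCG: "BC (graph_weight X) n > 0"
    proof -
      have "BC (graph_weight X) n \<ge> 0" by (rule BC_nonneg) (rule gw_nonneg)
      moreover have "BC (graph_weight X) n \<noteq> 0"
      proof
        assume "BC (graph_weight X) n = 0"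
        then have "TC (graph_weight X) n Tb \<le> 3 * real n * real n" by (rule BC_zero_TC)
        moreover have "TC (graph_weight X) n Tb > TC Pn n Tb - t" using dev[OF hTb] by linarith
        moreover have "3 * real n * real n < 7 * t"
        proof -
          have "real n * real n > 0" using npos by simp
          then show ?thesis using t12 by (simp add: power2_eq_square)
        qed
        ultimately show False using BCb small by linarith
      qed
      ultimately show ?thesis by linarith
    qed
    have TCG_le: "TC (graph_weight X) n T \<le> TC (graph_weight X) n Tb"
      using oT hTb rho_pos[OF BCG] unfolding optimal_def H_def by blast
    have d1: "\<bar>TC (graph_weight X) n T - TC Pn n Tb\<bar> < t"
      using dev[OF hT] dev[OF hTb] TCb_le TCG_le by linarith
    have "(2 * t / BC Pn n) * BC Pn n = 2 * t" using BCpos by simp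
    moreover have "(2 * t / BC Pn n) * BC Pn n \<le> (2 * t / BC Pn n) * TC Pn n Tb"
      using BCb BCpos tpos by (intro mult_left_mono) auto
    ultimately show "\<bar>TC (graph_weight X) n T - TC Pn n Tb\<bar> \<le> (2 * t / BC Pn n) * TC Pn n Tb"
      using d1 tpos by linarith
  qed
  have "measure_pmf.prob (random_graph n Pn) (UNIV - Bad) = 1 - measure_pmf.prob (random_graph n Pn) Bad"
    using measure_pmf.prob_compl[of Bad "random_graph n Pn"] by simp
  moreover have "measure_pmf.prob (random_graph n Pn) (UNIV - Bad) \<le>
      measure_pmf.prob (random_graph n Pn) {E. \<forall>T Tb. optimal (graph_weight E) n T \<longrightarrow> optimal Pn n Tb \<longrightarrow>
              \<bar>TC (graph_weight E) n T - TC Pn n Tb\<bar> \<le> (2 * t / BC Pn n) * TC Pn n Tb}"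
    by (rule measure_pmf.finite_measure_mono[OF good]) simp
  moreover have "real n powr (- 1) = 1 / real n" using npos by (simp add: powr_neg_one)
  ultimately show ?thesis using pB' by linarith
qed

theorem proposition3:
  fixes P :: "nat \<Rightarrow> nat \<Rightarrow> nat \<Rightarrow> real"
  assumes sym: "\<And>n i j. i < n \<Longrightarrow> j < n \<Longrightarrow> P n i j = P n j i"
    and range: "\<And>n i j. i < n \<Longrightarrow> j < n \<Longrightarrow> 0 \<le> P n i j \<and> P n i j \<le> 1"
    and dense: "\<And>c. c > 0 \<Longrightarrow> \<forall>\<^sub>F n in sequentially.
                  \<forall>i<n. \<forall>j<n. i \<noteq> j \<longrightarrow> c * sqrt (ln (real n) / real n) \<le> P n i j"
  shows "\<exists>\<epsilon>>0. \<exists>f :: nat \<Rightarrow> real. f \<longlonglongrightarrow> 0 \<and>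
           (\<forall>\<^sub>F n in sequentially.
              measure_pmf.prob (random_graph n (P n))
                {E. \<forall>T Tb. optimal (graph_weight E) n T \<longrightarrow> optimal (P n) n Tb \<longrightarrow>
                      \<bar>TC (graph_weight E) n T - TC (P n) n Tb\<bar> \<le> f n * TC (P n) n Tb}
              > 1 - real n powr (- \<epsilon>))"
proof -
  define t :: "nat \<Rightarrow> real" where "t n = 12 * real n ^ 2 * sqrt (real n * ln (real n))" for n
  define f where "f n = 2 * t n / BC (P n) n" for n
  have Pnn: "\<And>n i j. i < j \<Longrightarrow> j < n \<Longrightarrow> 0 \<le> P n i j" using range by force
  have BCnn: "0 \<le> BC (P n) n" for n by (rule BC_nonneg) (rule Pnn)
  have nlnn: "0 \<le> real n * ln (real n)" for n
    by (cases "n = 0") (auto intro!: mult_nonneg_nonneg)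
  have tnn: "0 \<le> t n" for n unfolding t_def using nlnn[of n] by simp
  have fnn: "0 \<le> f n" for n unfolding f_def using tnn[of n] BCnn[of n] by simp
  have spos: "real n ^ 2 * sqrt (real n * ln (real n)) > 0" if "n \<ge> 4" for n
  proof -
    have "ln (real n) > 0" using that by simp
    then show ?thesis using that by (intro mult_pos_pos) auto
  qed
  have fb: "f n \<le> 2592 / c"
    if c: "c > 0" and n: "n \<ge> 4" and d: "\<forall>i<n. \<forall>j<n. i \<noteq> j \<longrightarrow> c * sqrt (ln (real n) / real n) \<le> P n i j"
    for c n
  proof -
    define s where "s = real n ^ 2 * sqrt (real n * ln (real n))"
    have s: "s > 0" unfolding s_def using spos[OF n] .
    have B: "BC (P n) n \<ge> c * s / 108" unfolding s_def
      using BC_lower[OF n c d] by (simp add: mult.assoc)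
    have Bpos: "c * s / 108 > 0" using c s by simp
    have "f n = 24 * s / BC (P n) n" unfolding f_def t_def s_def by simp
    also have "\<dots> \<le> 24 * s / (c * s / 108)"
      using B Bpos s by (intro divide_left_mono) auto
    also have "\<dots> = 2592 / c" using s c by (simp add: field_simps)
    finally show ?thesis .
  qed
  have lim: "f \<longlonglongrightarrow> 0"
  proof (rule tendstoI)
    fix e :: real assume e: "e > 0"
    have "eventually (\<lambda>n. \<forall>i<n. \<forall>j<n. i \<noteq> j \<longrightarrow> (5184 / e) * sqrt (ln (real n) / real n) \<le> P n i j) sequentially"
      using dense[of "5184 / e"] e by simp
    moreover have "eventually (\<lambda>n. n \<ge> 4) sequentially" by (rule eventually_ge_at_top)
    ultimately show "eventually (\<lambda>n. dist (f n) 0 < e) sequentially"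
    proof eventually_elim
      case (elim n)
      have "f n \<le> 2592 / (5184 / e)" using fb[of "5184 / e" n] elim e by simp
      also have "2592 / (5184 / e) = e / 2" using e by simp
      finally show ?case using fnn[of n] e by simp
    qed
  qed
  have ev: "\<forall>\<^sub>F n in sequentially.
              measure_pmf.prob (random_graph n (P n))
                {E. \<forall>T Tb. optimal (graph_weight E) n T \<longrightarrow> optimal (P n) n Tb \<longrightarrow>
                      \<bar>TC (graph_weight E) n T - TC (P n) n Tb\<bar> \<le> f n * TC (P n) n Tb}
              > 1 - real n powr (- 1)"
  proof -
    have e1: "eventually (\<lambda>n. f n < 1 / 4) sequentially"
      using lim by (rule order_tendstoD) simp
    have e2: "eventually (\<lambda>n. \<forall>i<n. \<forall>j<n. i \<noteq> j \<longrightarrow> 1 * sqrt (ln (real n) / real n) \<le> P n i j) sequentially"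
      using dense[of 1] by simp
    have e3: "eventually (\<lambda>n. n \<ge> 4) sequentially" by (rule eventually_ge_at_top)
    from e1 e2 e3 show ?thesis
    proof eventually_elim
      case (elim n)
      have n: "n \<ge> 4" using elim by simp
      have B: "BC (P n) n \<ge> 1 * real n ^ 2 * sqrt (real n * ln (real n)) / 108"
        by (rule BC_lower[OF n]) (use elim in auto)
      have Bpos: "BC (P n) n > 0" using B spos[OF n] by simp
      have "2 * t n / BC (P n) n < 1 / 4" using elim unfolding f_def by simp
      then have small: "8 * t n \<le> BC (P n) n" using Bpos by (simp add: divide_simps)
      have r: "\<And>i j. i < n \<Longrightarrow> j < n \<Longrightarrow> 0 \<le> P n i j \<and> P n i j \<le> 1" by (rule range)
      show ?case
        using main_step[OF n r Bpos t_def[of n] small] unfolding f_def by simp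
    qed
  qed
  show ?thesis
    by (intro exI[of _ 1] exI[of _ f] conjI) (use lim ev in auto)
qed


end
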